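(* Let $X$ be a real random variable with density $p$, $\mathbb{E}X=0$, $\mathrm{Var}(X)=1$, $\mathbb{E}|X|^s<\infty$ for some $s>2$, and suppose $\|p-\phi\|_2\le1$. Then there exist $C_1,C_2>0$ such that \[ D(X)\le C_1\big(\|p-\phi\|_1+\|p-\phi\|_2\big)+C_2(\mathbb{E}|X|^s)^{2/s}\big(\|p-\phi\|_1+\|p-\phi\|_2\big)^{1-2/s}. \]
   Context: $\phi(x)=(2\pi)^{-1/2}e^{-x^2/2}$. $D(X)$ denotes the Kullback–Leibler divergence of $X$ from a Gaussian with the same mean and variance as $X$; here $D(X)=\int p\ln(p/\phi)$. $\|\cdot\|_q$ is the $L^q(\mathbb{R})$ norm. *)

theory Defs
  imports "HOL-Probability.Probability"
begin

definition is_density :: "(real \<Rightarrow> real) \<Rightarrow> bool" where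
  "is_density p \<longleftrightarrow> p \<in> borel_measurable lborel \<and> (\<forall>x. 0 \<le> p x)
     \<and> integrable lborel p \<and> (\<integral>x. p x \<partial>lborel) = 1"

definition L1norm :: "(real \<Rightarrow> real) \<Rightarrow> real" where
  "L1norm f = (\<integral>x. \<bar>f x\<bar> \<partial>lborel)"

definition L2norm :: "(real \<Rightarrow> real) \<Rightarrow> real" where
  "L2norm f = sqrt (\<integral>x. (f x)\<^sup>2 \<partial>lborel)"

text \<open>Relative entropy of the density p from the standard Gaussian,
  D = integral of p ln (p / phi), with the convention 0 ln 0 = 0.\<close>
definition rel_entropy_gauss :: "(real \<Rightarrow> real) \<Rightarrow> real" where
  "rel_entropy_gauss p = (\<integral>x. p x * ln (p x / std_normal_density x) \<partial>lborel)"

end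

theory Submission
  imports Defs
begin

lemma young_pt:
  fixes s x :: real assumes "s > 2"
  shows "x\<^sup>2 \<le> (2/s) * \<bar>x\<bar> powr s + (1 - 2/s)"
proof (cases "x = 0")
  case True then show ?thesis using assms by simp
next
  case False
  have "(\<bar>x\<bar> powr s) powr (2/s) * 1 powr (1 - 2/s) \<le> (2/s) * \<bar>x\<bar> powr s + (1 - 2/s) * 1"
    using assms False by (intro Youngs_inequality_0) auto
  moreover have "(\<bar>x\<bar> powr s) powr (2/s) = x\<^sup>2"
    using assms False by (simp add: powr_powr powr_numeral)
  ultimately show ?thesis by simp
qed

lemma key_pt:
  fixes p q L :: real
  assumes "p \<ge> 0" "q > 0" "q \<le> 1" "- ln q \<le> L"
  shows "p * ln (p / q) \<le> (p - q)\<^sup>2 + \<bar>p - q\<bar> * (1 + L)"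
    and "p - q \<le> p * ln (p / q)"
proof -
  have L0: "L \<ge> 0" using assms by (smt (verit) ln_le_zero_iff)
  show "p * ln (p / q) \<le> (p - q)\<^sup>2 + \<bar>p - q\<bar> * (1 + L)"
  proof (cases "p \<ge> q")
    case True
    then have pp: "p > 0" using assms by simp
    have "q * ln (p / q) \<le> q * (p / q - 1)"
      using assms pp by (intro mult_left_mono ln_le_minus_one) auto
    also have "\<dots> = p - q" using assms by (simp add: field_simps)
    finally have a: "p * ln (p / q) \<le> (p - q) * (1 + ln (p / q))"
      by (simp add: algebra_simps)
    have "ln p \<le> p - 1" using pp by (rule ln_le_minus_one)
    then have "1 + ln (p / q) \<le> (p - q) + 1 + L"
      using assms pp ln_div[of p q] by simp
    then have "(p - q) * (1 + ln (p / q)) \<le> (p - q) * ((p - q) + 1 + L)"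
      using True by (intro mult_left_mono) auto
    with a True show ?thesis by (simp add: power2_eq_square algebra_simps)
  next
    case False
    show ?thesis
    proof (cases "p = 0")
      case True then show ?thesis using assms L0 by simp
    next
      case F: False
      then have "ln (p / q) \<le> 0" using False assms by simp
      then have "p * ln (p / q) \<le> 0" using assms by (simp add: mult_nonneg_nonpos)
      moreover have "0 \<le> (p - q)\<^sup>2 + \<bar>p - q\<bar> * (1 + L)"
      proof -
        show ?thesis using L0 by simp
      qed
      ultimately show ?thesis by linarith
    qed
  qed
  show "p - q \<le> p * ln (p / q)"
  proof (cases "p = 0")
    case True then show ?thesis using assms by simp
  next
    case False
    then have pp: "p > 0" using assms by simp
    have "ln (q / p) \<le> q / p - 1" using pp assms by (intro ln_le_minus_one) auto
    moreover have "ln (p / q) = - ln (q / p)" using pp assms by (simp add: ln_div)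
    ultimately have "p * ln (p / q) \<ge> p * (1 - q / p)"
      using pp by (intro mult_left_mono) auto
    moreover have "p * (1 - q / p) = p - q" using pp by (simp add: field_simps)
    ultimately show ?thesis by linarith
  qed
qed

lemma phi_bounds:
  fixes x :: real
  shows "std_normal_density x \<le> 1" "- ln (std_normal_density x) \<le> x\<^sup>2 / 2 + 2"
proof -
  have sp: "sqrt (2 * pi) \<ge> 1" using pi_gt3 by simp
  have "std_normal_density x = exp (- x\<^sup>2 / 2) / sqrt (2 * pi)"
    by (simp add: std_normal_density_def)
  moreover have "exp (- x\<^sup>2 / 2) \<le> 1" by simp
  ultimately show "std_normal_density x \<le> 1" using sp
    by (smt (verit) divide_le_eq_1 exp_gt_zero)
  have "ln (std_normal_density x) = - x\<^sup>2 / 2 - ln (sqrt (2 * pi))"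
    by (simp add: std_normal_density_def ln_mult ln_div)
  moreover have "ln (sqrt (2 * pi)) \<le> sqrt (2 * pi) - 1" using sp by (intro ln_le_minus_one) auto
  moreover have "sqrt (2 * pi) \<le> 3"
  proof -
    have "2 * pi \<le> 3\<^sup>2" using pi_less_4 by simp
    then have "sqrt (2 * pi) \<le> sqrt (3\<^sup>2)" by (rule real_sqrt_le_mono)
    then show ?thesis by simp
  qed
  ultimately show "- ln (std_normal_density x) \<le> x\<^sup>2 / 2 + 2" by simp
qed


lemma trunc_pt:
  fixes p q R s x :: real
  assumes "R > 0" "s > 2" "p \<ge> 0" "q \<ge> 0"
  shows "\<bar>p - q\<bar> * x\<^sup>2 \<le> R\<^sup>2 * \<bar>p - q\<bar> + R powr (2 - s) * (\<bar>x\<bar> powr s * p + \<bar>x\<bar> powr s * q)"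
proof (cases "\<bar>x\<bar> \<le> R")
  case True
  then have "\<bar>x\<bar>^2 \<le> R^2" by (intro power_mono) auto
  then have "x\<^sup>2 \<le> R\<^sup>2" by simp
  then have "\<bar>p - q\<bar> * x\<^sup>2 \<le> R\<^sup>2 * \<bar>p - q\<bar>" by (simp add: mult_left_mono mult.commute)
  moreover have "0 \<le> R powr (2 - s) * (\<bar>x\<bar> powr s * p + \<bar>x\<bar> powr s * q)"
    using assms by simp
  ultimately show ?thesis by linarith
next
  case False
  then have xR: "\<bar>x\<bar> > R" by simp
  have "x\<^sup>2 = \<bar>x\<bar> powr s * \<bar>x\<bar> powr (2 - s)"
    using xR assms by (simp add: powr_add[symmetric] powr_numeral)
  also have "\<dots> \<le> \<bar>x\<bar> powr s * R powr (2 - s)"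
    using xR assms by (intro mult_left_mono powr_mono2') auto
  finally have a: "x\<^sup>2 \<le> \<bar>x\<bar> powr s * R powr (2 - s)" .
  have "\<bar>p - q\<bar> * x\<^sup>2 \<le> (p + q) * (\<bar>x\<bar> powr s * R powr (2 - s))"
    using assms a by (intro mult_mono) auto
  also have "\<dots> = R powr (2 - s) * (\<bar>x\<bar> powr s * p + \<bar>x\<bar> powr s * q)"
    by (simp add: algebra_simps)
  finally show ?thesis using assms by (smt (verit) mult_nonneg_nonneg abs_ge_zero zero_le_power2)
qed

lemma phi_s_int:
  fixes s :: real assumes "s > 0"
  shows "integrable lborel (\<lambda>x. \<bar>x\<bar> powr s * std_normal_density x)"
proof (rule Bochner_Integration.integrable_bound)
  define k where "k = nat \<lceil>s\<rceil>"
  have sk: "s \<le> real k" unfolding k_def by linarith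
  show "integrable lborel (\<lambda>x. std_normal_density x + std_normal_density x * \<bar>x\<bar> ^ k)"
    by (intro Bochner_Integration.integrable_add integrable_std_normal_moment_abs integrable_normal_density) auto
  show "(\<lambda>x. \<bar>x\<bar> powr s * std_normal_density x) \<in> borel_measurable lborel" by measurable
  show "AE x in lborel. norm (\<bar>x\<bar> powr s * std_normal_density x)
      \<le> norm (std_normal_density x + std_normal_density x * \<bar>x\<bar> ^ k)"
  proof (rule AE_I2)
    fix x :: real
    have b: "\<bar>x\<bar> powr s \<le> 1 + \<bar>x\<bar> ^ k"
    proof (cases "\<bar>x\<bar> \<le> 1")
      case True
      then have "\<bar>x\<bar> powr s \<le> 1" using assms powr_mono2[of s "\<bar>x\<bar>" 1]
        by simp
      moreover have "0 \<le> \<bar>x\<bar> ^ k" by simp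
      ultimately show ?thesis by linarith
    next
      case False
      then have "\<bar>x\<bar> powr s \<le> \<bar>x\<bar> powr (real k)" using sk by (intro powr_mono) auto
      also have "\<dots> = \<bar>x\<bar> ^ k" using False by (simp add: powr_realpow)
      finally show ?thesis by simp
    qed
    have "\<bar>x\<bar> powr s * std_normal_density x \<le> (1 + \<bar>x\<bar> ^ k) * std_normal_density x"
      using b by (intro mult_right_mono) auto
    then show "norm (\<bar>x\<bar> powr s * std_normal_density x)
      \<le> norm (std_normal_density x + std_normal_density x * \<bar>x\<bar> ^ k)"
      by (simp add: algebra_simps)
  qed
qed


lemma powr_alg:
  fixes M e s :: real
  assumes "M \<ge> 1" "e > 0" "s > 2"
  shows "((M/e) powr (1/s))\<^sup>2 * e = M powr (2/s) * e powr (1 - 2/s)"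
    and "((M/e) powr (1/s)) powr (2 - s) * M = M powr (2/s) * e powr (1 - 2/s)"
proof -
  have M0: "M > 0" using assms by simp
  have "((M/e) powr (1/s))\<^sup>2 = (M/e) powr (2/s)"
    using assms by (simp add: powr_powr powr_numeral[symmetric])
  also have "\<dots> = M powr (2/s) / e powr (2/s)" using M0 assms by (simp add: powr_divide)
  finally have a: "((M/e) powr (1/s))\<^sup>2 = M powr (2/s) / e powr (2/s)" .
  have b: "e powr (1 - 2/s) = e / e powr (2/s)" using assms by (simp add: powr_diff)
  show "((M/e) powr (1/s))\<^sup>2 * e = M powr (2/s) * e powr (1 - 2/s)"
    using a b by simp
  have "((M/e) powr (1/s)) powr (2 - s) = (M/e) powr ((2 - s)/s)"
    using assms by (simp add: powr_powr)
  also have "\<dots> = M powr ((2 - s)/s) / e powr ((2 - s)/s)" using M0 assms by (simp add: powr_divide)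
  finally have c: "((M/e) powr (1/s)) powr (2 - s) = M powr ((2 - s)/s) / e powr ((2 - s)/s)" .
  have d: "M powr ((2 - s)/s) * M = M powr (2/s)"
  proof -
    have "M powr ((2 - s)/s) * M = M powr ((2 - s)/s) * M powr 1" using M0 by simp
    also have "\<dots> = M powr ((2 - s)/s + 1)" using M0 by (simp add: powr_add)
    also have "(2 - s)/s + 1 = 2/s" using assms by (simp add: field_simps)
    finally show ?thesis .
  qed
  have f: "1 / e powr ((2 - s)/s) = e powr (1 - 2/s)"
  proof -
    have "1 / e powr ((2 - s)/s) = e powr (- ((2 - s)/s))" using assms by (simp add: powr_minus_divide)
    also have "- ((2 - s)/s) = 1 - 2/s" using assms by (simp add: field_simps)
    finally show ?thesis .
  qed
  show "((M/e) powr (1/s)) powr (2 - s) * M = M powr (2/s) * e powr (1 - 2/s)"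
    unfolding c using d f by (metis (no_types, lifting) mult.commute times_divide_eq_left times_divide_eq_right mult.right_neutral)
qed

lemma lin_comb:
  fixes D A L B I X Y a b :: real
  assumes "D \<le> A + 3 * B + 1/2 * I" "A \<le> L" "I \<le> X + Y" "X \<le> a" "Y \<le> b"
  shows "D \<le> L + 3 * B + 1/2 * (a + b)"
  using assms by (simp add: field_simps)

theorem corollary2p4:
  fixes s :: real
  assumes "s > 2"
  shows "\<exists>C1 C2. C1 > 0 \<and> C2 > 0 \<and>
    (\<forall>p :: real \<Rightarrow> real.
       is_density p
       \<and> integrable lborel (\<lambda>x. x * p x) \<and> (\<integral>x. x * p x \<partial>lborel) = 0
       \<and> integrable lborel (\<lambda>x. x\<^sup>2 * p x) \<and> (\<integral>x. x\<^sup>2 * p x \<partial>lborel) = 1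
       \<and> integrable lborel (\<lambda>x. \<bar>x\<bar> powr s * p x)
       \<and> integrable lborel (\<lambda>x. (p x - std_normal_density x)\<^sup>2)
       \<and> L2norm (\<lambda>x. p x - std_normal_density x) \<le> 1
     \<longrightarrow> integrable lborel (\<lambda>x. p x * ln (p x / std_normal_density x))
       \<and> rel_entropy_gauss p \<le>
           C1 * (L1norm (\<lambda>x. p x - std_normal_density x) + L2norm (\<lambda>x. p x - std_normal_density x))
         + C2 * (\<integral>x. \<bar>x\<bar> powr s * p x \<partial>lborel) powr (2 / s)
              * (L1norm (\<lambda>x. p x - std_normal_density x) + L2norm (\<lambda>x. p x - std_normal_density x)) powr (1 - 2 / s))"
proof -
  let ?\<phi> = "std_normal_density"
  define K where "K = (\<integral>x. \<bar>x\<bar> powr s * ?\<phi> x \<partial>lborel)"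
  have K0: "K \<ge> 0" unfolding K_def by (intro integral_nonneg_AE) auto
  have Kint: "integrable lborel (\<lambda>x. \<bar>x\<bar> powr s * ?\<phi> x)" using assms by (intro phi_s_int) auto
  show ?thesis
  proof (rule exI[where x="3::real"], rule exI[where x="1 + K/2"], intro conjI allI impI)
    show "(3::real) > 0" by simp
    show "1 + K/2 > 0" using K0 by simp
    fix p :: "real \<Rightarrow> real"
    assume H: "is_density p
       \<and> integrable lborel (\<lambda>x. x * p x) \<and> (\<integral>x. x * p x \<partial>lborel) = 0
       \<and> integrable lborel (\<lambda>x. x\<^sup>2 * p x) \<and> (\<integral>x. x\<^sup>2 * p x \<partial>lborel) = 1
       \<and> integrable lborel (\<lambda>x. \<bar>x\<bar> powr s * p x)
       \<and> integrable lborel (\<lambda>x. (p x - std_normal_density x)\<^sup>2)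
       \<and> L2norm (\<lambda>x. p x - std_normal_density x) \<le> 1"
    then have pm: "p \<in> borel_measurable lborel" and pnn: "\<And>x. 0 \<le> p x"
      and pint: "integrable lborel p"
      and x2int: "integrable lborel (\<lambda>x. x\<^sup>2 * p x)" and x21: "(\<integral>x. x\<^sup>2 * p x \<partial>lborel) = 1"
      and Mint: "integrable lborel (\<lambda>x. \<bar>x\<bar> powr s * p x)"
      and d2int: "integrable lborel (\<lambda>x. (p x - ?\<phi> x)\<^sup>2)"
      and L2le: "L2norm (\<lambda>x. p x - ?\<phi> x) \<le> 1"
      unfolding is_density_def by auto
    have [measurable]: "p \<in> borel_measurable borel" using pm by simp
    define L1 where "L1 = L1norm (\<lambda>x. p x - ?\<phi> x)"
    define L2 where "L2 = L2norm (\<lambda>x. p x - ?\<phi> x)"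
    define M where "M = (\<integral>x. \<bar>x\<bar> powr s * p x \<partial>lborel)"
    define I where "I = (\<integral>x. \<bar>p x - ?\<phi> x\<bar> * x\<^sup>2 \<partial>lborel)"
    have dint: "integrable lborel (\<lambda>x. \<bar>p x - ?\<phi> x\<bar>)"
      by (intro integrable_abs Bochner_Integration.integrable_diff pint) auto
    have x2phi: "integrable lborel (\<lambda>x. x\<^sup>2 * ?\<phi> x)"
      using integrable_std_normal_moment[of 2] by (simp add: mult.commute)
    have dx2int: "integrable lborel (\<lambda>x. \<bar>p x - ?\<phi> x\<bar> * x\<^sup>2)"
    proof -
      have "integrable lborel (\<lambda>x. \<bar>x\<^sup>2 * p x - x\<^sup>2 * ?\<phi> x\<bar>)"
        by (intro integrable_abs Bochner_Integration.integrable_diff x2int x2phi)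
      moreover have "\<And>x. \<bar>x\<^sup>2 * p x - x\<^sup>2 * ?\<phi> x\<bar> = \<bar>p x - ?\<phi> x\<bar> * x\<^sup>2"
        by (metis abs_mult abs_power2 mult.commute right_diff_distrib)
      ultimately show ?thesis by simp
    qed
    define g where "g x = (p x - ?\<phi> x)\<^sup>2 + 3 * \<bar>p x - ?\<phi> x\<bar> + (1/2) * (\<bar>p x - ?\<phi> x\<bar> * x\<^sup>2)" for x
    have gint: "integrable lborel g" unfolding g_def
      by (intro Bochner_Integration.integrable_add integrable_mult_right d2int dint dx2int)
    have up: "p x * ln (p x / ?\<phi> x) \<le> g x" for x
    proof -
      have "p x * ln (p x / ?\<phi> x) \<le> (p x - ?\<phi> x)\<^sup>2 + \<bar>p x - ?\<phi> x\<bar> * (1 + (x\<^sup>2/2 + 2))"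
        using pnn phi_bounds[of x] by (intro key_pt(1)) (auto intro: normal_density_pos)
      then show ?thesis unfolding g_def by (simp add: algebra_simps)
    qed
    have lo: "p x - ?\<phi> x \<le> p x * ln (p x / ?\<phi> x)" for x
      using pnn phi_bounds[of x] by (intro key_pt(2)) (auto intro: normal_density_pos)
    have gge: "\<bar>p x - ?\<phi> x\<bar> \<le> g x" for x
      unfolding g_def by simp
    have hint: "integrable lborel (\<lambda>x. p x * ln (p x / ?\<phi> x))"
    proof (rule Bochner_Integration.integrable_bound[OF gint])
      show "(\<lambda>x. p x * ln (p x / ?\<phi> x)) \<in> borel_measurable lborel" by measurable
      show "AE x in lborel. norm (p x * ln (p x / ?\<phi> x)) \<le> norm (g x)"
      proof (rule AE_I2)
        fix x show "norm (p x * ln (p x / ?\<phi> x)) \<le> norm (g x)"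
          using up[of x] lo[of x] gge[of x] by auto
      qed
    qed
    have L1eq: "L1 = (\<integral>x. \<bar>p x - ?\<phi> x\<bar> \<partial>lborel)" unfolding L1_def L1norm_def ..
    have L2sq: "L2\<^sup>2 = (\<integral>x. (p x - ?\<phi> x)\<^sup>2 \<partial>lborel)" unfolding L2_def L2norm_def
      by (simp add: integral_nonneg_AE)
    have L10: "L1 \<ge> 0" unfolding L1eq by (intro integral_nonneg_AE) auto
    have L20: "L2 \<ge> 0" unfolding L2_def L2norm_def by simp
    have L2le': "L2 \<le> 1" using L2le unfolding L2_def .
    have I0: "I \<ge> 0" unfolding I_def by (intro integral_nonneg_AE) auto
    have D1: "rel_entropy_gauss p \<le> L2\<^sup>2 + 3 * L1 + (1/2) * I"
    proof -
      have "rel_entropy_gauss p \<le> (\<integral>x. g x \<partial>lborel)"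
        unfolding rel_entropy_gauss_def by (intro integral_mono hint gint up)
      also have "(\<integral>x. g x \<partial>lborel) = L2\<^sup>2 + 3 * L1 + (1/2) * I"
        unfolding g_def L2sq L1eq I_def
        by (simp add: Bochner_Integration.integral_add integrable_mult_right d2int dint dx2int)
      finally show ?thesis .
    qed
    have M1: "M \<ge> 1"
    proof -
      have "1 = (\<integral>x. x\<^sup>2 * p x \<partial>lborel)" using x21 by simp
      also have "\<dots> \<le> (\<integral>x. (2/s) * (\<bar>x\<bar> powr s * p x) + (1 - 2/s) * p x \<partial>lborel)"
      proof (intro integral_mono x2int Bochner_Integration.integrable_add integrable_mult_right Mint pint)
        fix x
        have "x\<^sup>2 * p x \<le> ((2/s) * \<bar>x\<bar> powr s + (1 - 2/s)) * p x"
          using young_pt[OF assms, of x] pnn[of x] by (intro mult_right_mono) auto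
        then show "x\<^sup>2 * p x \<le> (2/s) * (\<bar>x\<bar> powr s * p x) + (1 - 2/s) * p x"
          by (simp add: algebra_simps)
      qed
      also have "\<dots> = (2/s) * M + (1 - 2/s)"
        using H unfolding M_def is_density_def
        by (simp add: Bochner_Integration.integral_add integrable_mult_right Mint pint)
      finally have "1 \<le> (2/s) * M + (1 - 2/s)" .
      then have "(2/s) * 1 \<le> (2/s) * M" by linarith
      moreover have "2/s > 0" using assms by simp
      ultimately show ?thesis by (simp only: mult_le_cancel_left_pos)
    qed
    define \<epsilon> where "\<epsilon> = L1 + L2"
    have main: "rel_entropy_gauss p \<le> 3 * \<epsilon> + (1 + K/2) * M powr (2/s) * \<epsilon> powr (1 - 2/s)"
    proof (cases "\<epsilon> = 0")
      case True
      then have L1z: "L1 = 0" and L2z: "L2 = 0" using L10 L20 unfolding \<epsilon>_def by auto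
      have "AE x in lborel. \<bar>p x - ?\<phi> x\<bar> = 0"
        using L1z unfolding L1eq by (subst (asm) integral_nonneg_eq_0_iff_AE) (auto intro: dint)
      then have "AE x in lborel. \<bar>p x - ?\<phi> x\<bar> * x\<^sup>2 = 0" by eventually_elim simp
      then have "I = 0" unfolding I_def by (rule integral_eq_zero_AE)
      then show ?thesis using D1 L1z L2z True by simp
    next
      case False
      then have ep: "\<epsilon> > 0" using L10 L20 unfolding \<epsilon>_def by auto
      define R where "R = (M/\<epsilon>) powr (1/s)"
      have R0: "R > 0" unfolding R_def using M1 ep by simp
      have "I \<le> (\<integral>x. R\<^sup>2 * \<bar>p x - ?\<phi> x\<bar> + R powr (2 - s) * (\<bar>x\<bar> powr s * p x + \<bar>x\<bar> powr s * ?\<phi> x) \<partial>lborel)"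
        unfolding I_def
        by (intro integral_mono dx2int Bochner_Integration.integrable_add integrable_mult_right dint Mint Kint
              trunc_pt[OF R0 assms] pnn normal_density_nonneg)
      also have "\<dots> = R\<^sup>2 * L1 + R powr (2 - s) * (M + K)"
        unfolding L1eq M_def K_def
        by (simp add: Bochner_Integration.integral_add integrable_mult_right dint Mint Kint)
      finally have Ib: "I \<le> R\<^sup>2 * L1 + R powr (2 - s) * (M + K)" .
      define a where "a = M powr (2/s) * \<epsilon> powr (1 - 2/s)"
      have a0: "a \<ge> 0" unfolding a_def by simp
      have "R\<^sup>2 * L1 \<le> R\<^sup>2 * \<epsilon>" using L20 unfolding \<epsilon>_def by (intro mult_left_mono) auto
      also have "\<dots> = a" unfolding R_def a_def using powr_alg(1)[OF M1 ep assms] .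
      finally have t1: "R\<^sup>2 * L1 \<le> a" .
      have "R powr (2 - s) * (M + K) = (R powr (2 - s) * M) * (1 + K / M)"
        using M1 by (simp add: field_simps)
      also have "R powr (2 - s) * M = a" unfolding R_def a_def using powr_alg(2)[OF M1 ep assms] .
      also have "a * (1 + K / M) \<le> a * (1 + K)"
      proof -
        have "K / M \<le> K" using M1 K0 by (simp add: divide_le_eq mult_le_cancel_left1 mult.commute)
        then show ?thesis using a0 by (intro mult_left_mono) auto
      qed
      finally have t2: "R powr (2 - s) * (M + K) \<le> a * (1 + K)" .
      have "L2\<^sup>2 \<le> L2" using L20 L2le' by (simp add: power2_eq_square mult_left_le)
      then have "rel_entropy_gauss p \<le> L2 + 3 * L1 + (1/2) * (a + a * (1 + K))"
        by (rule lin_comb[OF D1 _ Ib t1 t2])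
      also have "\<dots> \<le> 3 * \<epsilon> + (1 + K/2) * a" using L20 unfolding \<epsilon>_def by (simp add: algebra_simps)
      finally show ?thesis unfolding a_def by (simp add: mult.assoc)
    qed
    show "integrable lborel (\<lambda>x. p x * ln (p x / std_normal_density x))" using hint .
    show "rel_entropy_gauss p \<le>
           3 * (L1norm (\<lambda>x. p x - std_normal_density x) + L2norm (\<lambda>x. p x - std_normal_density x))
         + (1 + K/2) * (\<integral>x. \<bar>x\<bar> powr s * p x \<partial>lborel) powr (2 / s)
              * (L1norm (\<lambda>x. p x - std_normal_density x) + L2norm (\<lambda>x. p x - std_normal_density x)) powr (1 - 2 / s)"
      using main unfolding \<epsilon>_def L1_def L2_def M_def .
  qed
qed

end
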